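(* Let $(X,d)$, $T$, $c$, $l$, $\alpha$ and $\rho$ be as follows: $(X,d)$ is a compact metric space, $T:\mathbb{Z}^k\times X\to X$ a continuous action, $c>0$ such that distinct $x,y$ satisfy $\sup_{u\in\mathbb{Z}^k}d(T^ux,T^uy)>c$, $l>0$ an integer such that $d(x,y)\geq c/2$ implies $d(T^ux,T^uy)\geq c$ for some $|u|\leq l$, $\alpha>1$ with $\alpha^l<2$, $\mathbf{n}(x,y)=\min\{n\geq0:\exists u\in\mathbb{Z}^k,|u|\leq n, d(T^ux,T^uy)\geq c\}$ ($=\infty$ if $x=y$), $\rho(x,y)=\alpha^{-\mathbf{n}(x,y)}$. Let $D$ be a distance function on $X$ with $\rho(x,y)/4\leq D(x,y)\leq\rho(x,y)$ for all $x,y$. If $n\geq1$ and $x,y\in X$ satisfy $\max_{u\in\mathbb{Z}^k,|u|<n}D(T^ux,T^uy)<1/(4\alpha)$, then $D(x,y)<\alpha^{-n}$.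
   Context: $|u|$ denotes the norm of $u\in\mathbb{Z}^k$ (a fixed norm, e.g. Euclidean). *)

theory Defs
  imports "HOL-Analysis.Analysis" "HOL-Library.Extended_Nat"
begin

text \<open>Lattice points of Z^k are modelled as functions 'k \<Rightarrow> int over a finite
  index type 'k (k = CARD('k)); the norm is the Euclidean norm.\<close>

definition znorm :: "('k::finite \<Rightarrow> int) \<Rightarrow> real" where
  "znorm u = sqrt (\<Sum>i\<in>UNIV. (real_of_int (u i))\<^sup>2)"

definition is_cont_Zk_action :: "(('k::finite \<Rightarrow> int) \<Rightarrow> 'a::metric_space \<Rightarrow> 'a) \<Rightarrow> bool" where
  "is_cont_Zk_action T \<longleftrightarrow>
     (\<forall>x. T (\<lambda>_. 0) x = x) \<and>
     (\<forall>u v x. T (\<lambda>i. u i + v i) x = T u (T v x)) \<and>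
     (\<forall>u. continuous_on UNIV (T u))"

definition sepn :: "(('k::finite \<Rightarrow> int) \<Rightarrow> 'a::metric_space \<Rightarrow> 'a) \<Rightarrow> real \<Rightarrow> 'a \<Rightarrow> 'a \<Rightarrow> enat" where
  "sepn T c x y =
     (if \<exists>n::nat. \<exists>u. znorm u \<le> real n \<and> dist (T u x) (T u y) \<ge> c
      then enat (LEAST n::nat. \<exists>u. znorm u \<le> real n \<and> dist (T u x) (T u y) \<ge> c)
      else \<infinity>)"

definition rho :: "(('k::finite \<Rightarrow> int) \<Rightarrow> 'a::metric_space \<Rightarrow> 'a) \<Rightarrow> real \<Rightarrow> real \<Rightarrow> 'a \<Rightarrow> 'a \<Rightarrow> real" where
  "rho T c \<alpha> x y = (case sepn T c x y of enat n \<Rightarrow> inverse (\<alpha> ^ n) | \<infinity> \<Rightarrow> 0)"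

end

theory Submission
  imports Defs
begin

lemma sep_small:
  fixes T :: "('k::finite \<Rightarrow> int) \<Rightarrow> 'a::metric_space \<Rightarrow> 'a"
  assumes rD: "\<forall>x y. rho T c \<alpha> x y / 4 \<le> D x y \<and> D x y \<le> rho T c \<alpha> x y"
    and a: "\<alpha> > 1" and Dp: "D p q < 1 / (4 * \<alpha>)" and w: "znorm w \<le> 1"
  shows "dist (T w p) (T w q) < c"
proof (rule ccontr)
  assume "\<not> dist (T w p) (T w q) < c"
  hence wc: "dist (T w p) (T w q) \<ge> c" by simp
  let ?P = "\<lambda>n::nat. \<exists>u. znorm u \<le> real n \<and> dist (T u p) (T u q) \<ge> c"
  have P1: "?P 1" using w wc by auto
  define m where "m = (LEAST n. ?P n)"
  have m1: "m \<le> 1" unfolding m_def using P1 by (rule Least_le)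
  have "sepn T c p q = enat m" proof -
    have "\<exists>n::nat. ?P n" using P1 by blast
    thus ?thesis unfolding sepn_def m_def by (simp only: if_True)
  qed
  hence r: "rho T c \<alpha> p q = inverse (\<alpha> ^ m)" unfolding rho_def by simp
  have "\<alpha> ^ m \<le> \<alpha>" using m1 a by (cases m) auto
  hence "inverse \<alpha> \<le> inverse (\<alpha> ^ m)" using a by (intro le_imp_inverse_le) auto
  hence "inverse \<alpha> / 4 \<le> D p q" using rD r by (metis divide_right_mono order.trans zero_le_numeral)
  moreover have "inverse \<alpha> / 4 = 1 / (4 * \<alpha>)" by (simp add: field_simps)
  ultimately show False using Dp by simp
qed

lemma znorm_zero: "znorm (\<lambda>_. 0) = 0" by (simp add: znorm_def)

lemma znorm_unit:
  assumes "s = 1 \<or> s = -1"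
  shows "znorm (\<lambda>j. if j = i then s else 0) = 1"
proof -
  have "(\<Sum>j\<in>UNIV. (real_of_int (if j = i then s else 0))\<^sup>2) = (\<Sum>j\<in>UNIV. if j = i then (real_of_int s)\<^sup>2 else 0)"
    by (rule sum.cong) auto
  also have "\<dots> = (real_of_int s)\<^sup>2" by simp
  also have "\<dots> = 1" using assms by auto
  finally show ?thesis by (simp add: znorm_def)
qed

lemma znorm_dec:
  fixes v :: "'k::finite \<Rightarrow> int"
  assumes "v i \<noteq> 0"
  shows "znorm (\<lambda>j. v j - (if j = i then sgn (v i) else 0)) < znorm v"
proof -
  have "(\<Sum>j\<in>UNIV. (real_of_int (v j - (if j = i then sgn (v i) else 0)))\<^sup>2)
        < (\<Sum>j\<in>UNIV. (real_of_int (v j))\<^sup>2)"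
  proof (rule sum_strict_mono_ex1)
    show "\<forall>j\<in>UNIV. (real_of_int (v j - (if j = i then sgn (v i) else 0)))\<^sup>2 \<le> (real_of_int (v j))\<^sup>2"
    proof
      fix j :: 'k
      show "(real_of_int (v j - (if j = i then sgn (v i) else 0)))\<^sup>2 \<le> (real_of_int (v j))\<^sup>2"
      proof (cases "j = i")
        case True
        have "(v i - sgn (v i))\<^sup>2 \<le> (v i)\<^sup>2" using assms
          by (cases "v i > 0") (auto simp: power2_eq_square sgn_if algebra_simps)
        hence "real_of_int ((v i - sgn (v i))\<^sup>2) \<le> real_of_int ((v i)\<^sup>2)" by linarith
        thus ?thesis using True by simp
      qed simp
    qed
    have "(v i - sgn (v i))\<^sup>2 < (v i)\<^sup>2" using assms
      by (cases "v i > 0") (auto simp: power2_eq_square sgn_if algebra_simps)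
    hence "real_of_int ((v i - sgn (v i))\<^sup>2) < real_of_int ((v i)\<^sup>2)" by linarith
    thus "\<exists>j\<in>UNIV. (real_of_int (v j - (if j = i then sgn (v i) else 0)))\<^sup>2 < (real_of_int (v j))\<^sup>2"
      by (intro bexI[of _ i]) auto
  qed (simp)
  thus ?thesis unfolding znorm_def by (simp add: real_sqrt_less_iff)
qed

theorem lemma4p4:
  fixes T :: "('k::finite \<Rightarrow> int) \<Rightarrow> 'a::metric_space \<Rightarrow> 'a"
    and c \<alpha> :: real and l n :: nat and D :: "'a \<Rightarrow> 'a \<Rightarrow> real" and x y :: 'a
  assumes "compact (UNIV :: 'a set)"
    and "is_cont_Zk_action T"
    and "c > 0"
    and "\<forall>x y. x \<noteq> y \<longrightarrow> (SUP u. dist (T u x) (T u y)) > c"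
    and "l > 0"
    and "\<forall>x y. dist x y \<ge> c / 2 \<longrightarrow> (\<exists>u. znorm u \<le> real l \<and> dist (T u x) (T u y) \<ge> c)"
    and "\<alpha> > 1" and "\<alpha> ^ l < 2"
    and "\<forall>x y. D x y = 0 \<longleftrightarrow> x = y"
    and "\<forall>x y. D x y = D y x"
    and "\<forall>x y z. D x z \<le> D x y + D y z"
    and "\<forall>x y. rho T c \<alpha> x y / 4 \<le> D x y \<and> D x y \<le> rho T c \<alpha> x y"
    and "n \<ge> 1"
    and "\<forall>u. znorm u < real n \<longrightarrow> D (T u x) (T u y) < 1 / (4 * \<alpha>)"
  shows "D x y < inverse (\<alpha> ^ n)"
proof -
  note act = assms(2)[unfolded is_cont_Zk_action_def]
  have key: "dist (T v x) (T v y) < c" if v: "znorm v \<le> real n" for v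
  proof (cases "v = (\<lambda>_. 0)")
    case True
    have "real n > 0" using assms(13) by simp
    hence "znorm (\<lambda>_::'k. 0::int) < real n" by (simp add: znorm_zero)
    hence "D (T v x) (T v y) < 1 / (4 * \<alpha>)" using assms(14) True by blast
    have "\<forall>z. T (\<lambda>_. 0) z = z" using act by blast
    thus ?thesis using True sep_small[OF assms(12) assms(7) \<open>D (T v x) (T v y) < 1 / (4 * \<alpha>)\<close>, of "\<lambda>_. 0"] by (simp add: znorm_zero)
  next
    case False
    have "\<exists>i. v i \<noteq> 0"
    proof (rule ccontr)
      assume "\<not> (\<exists>i. v i \<noteq> 0)"
      hence "v = (\<lambda>_. 0)" by (intro ext) blast
      thus False using False by contradiction
    qed
    then obtain i where vi: "v i \<noteq> 0" by (elim exE)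
    define e where "e = (\<lambda>j. if j = i then sgn (v i) else 0)"
    define u where "u = (\<lambda>j. v j - e j)"
    have "znorm u < znorm v" unfolding u_def e_def by (rule znorm_dec[of v i, OF vi])
    hence "znorm u < real n" using v by linarith
    hence "D (T u x) (T u y) < 1 / (4 * \<alpha>)" using assms(14) by blast
    moreover have "sgn (v i) = 1 \<or> sgn (v i) = -1" using vi by (auto simp: sgn_if)
    hence "znorm e = 1" unfolding e_def by (rule znorm_unit)
    hence "znorm e \<le> 1" by simp
    ultimately have "dist (T e (T u x)) (T e (T u y)) < c"
      by (rule sep_small[OF assms(12) assms(7)])
    moreover have "(\<lambda>j. e j + u j) = v" unfolding u_def by auto
    moreover have "T (\<lambda>j. e j + u j) z = T e (T u z)" for z
    proof -
      have "\<forall>u v x. T (\<lambda>i. u i + v i) x = T u (T v x)" using act by (elim conjE)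
      thus ?thesis by (rule allE[of _ e], elim allE[of _ u] allE[of _ z])
    qed
    ultimately show ?thesis by simp
  qed
  have rlt: "rho T c \<alpha> x y < inverse (\<alpha> ^ n)"
  proof (cases "\<exists>m::nat. \<exists>u. znorm u \<le> real m \<and> dist (T u x) (T u y) \<ge> c")
    case True
    define m where "m = (LEAST m::nat. \<exists>u. znorm u \<le> real m \<and> dist (T u x) (T u y) \<ge> c)"
    have Pm: "\<exists>u. znorm u \<le> real m \<and> dist (T u x) (T u y) \<ge> c"
      unfolding m_def by (rule LeastI_ex[OF True])
    have "m > n"
    proof (rule ccontr)
      assume "\<not> m > n"
      hence mn: "real m \<le> real n" by simp
      obtain u where "znorm u \<le> real m" "dist (T u x) (T u y) \<ge> c" using Pm by blast
      hence "znorm u \<le> real n" "dist (T u x) (T u y) \<ge> c" using mn by linarith+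
      thus False using key[of u] by linarith
    qed
    have "sepn T c x y = enat m" unfolding sepn_def m_def using True by (simp only: if_True)
    hence r: "rho T c \<alpha> x y = inverse (\<alpha> ^ m)" unfolding rho_def by simp
    have "\<alpha> ^ n < \<alpha> ^ m" by (rule power_strict_increasing[OF \<open>m > n\<close> assms(7)])
    moreover have "0 < \<alpha> ^ n" using assms(7) by simp
    ultimately have "inverse (\<alpha> ^ m) < inverse (\<alpha> ^ n)" by (rule less_imp_inverse_less)
    thus ?thesis using r by simp
  next
    case False
    hence "sepn T c x y = \<infinity>" unfolding sepn_def by (rule if_not_P)
    hence "rho T c \<alpha> x y = 0" unfolding rho_def by simp
    thus ?thesis using assms(7) by simp
  qed
  moreover have "D x y \<le> rho T c \<alpha> x y" using assms(12) by blast
  ultimately show ?thesis by linarith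
qed

end
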